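(* For every integer $r\ge 4$ there exists an infinite family of connected $r$-regular graphs $G$, each containing a pair of closed twins, such that $\gamma^{LD}(G)>\frac{n(G)}{2}$.
   Context: All graphs are finite and simple; $n(G)$ is the number of vertices. A graph is $r$-regular if every vertex has degree $r$. Two distinct vertices $u,v$ are closed twins if $N[u]=N[v]$. For $S\subseteq V(G)$, $I(v)=N[v]\cap S$. A set $S$ is locating-dominating if every vertex $v$ has $I(v)\ne\emptyset$ and $I(u)\neq I(v)$ for all distinct $u,v\in V(G)\setminus S$. $\gamma^{LD}(G)$ denotes the minimum size of a locating-dominating set of $G$. *)

theory Defs
  imports Complex_Main
begin

definition simple_graph :: "nat set \<Rightarrow> (nat \<Rightarrow> nat \<Rightarrow> bool) \<Rightarrow> bool" where
  "simple_graph V E \<longleftrightarrow> finite V \<and>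
     (\<forall>u v. E u v \<longrightarrow> u \<in> V \<and> v \<in> V \<and> u \<noteq> v) \<and>
     (\<forall>u v. E u v \<longrightarrow> E v u)"

definition open_nbhd :: "(nat \<Rightarrow> nat \<Rightarrow> bool) \<Rightarrow> nat \<Rightarrow> nat set" where
  "open_nbhd E v = {u. E v u}"

definition closed_nbhd :: "(nat \<Rightarrow> nat \<Rightarrow> bool) \<Rightarrow> nat \<Rightarrow> nat set" where
  "closed_nbhd E v = insert v (open_nbhd E v)"

definition regular :: "nat set \<Rightarrow> (nat \<Rightarrow> nat \<Rightarrow> bool) \<Rightarrow> nat \<Rightarrow> bool" where
  "regular V E r \<longleftrightarrow> (\<forall>v\<in>V. card (open_nbhd E v) = r)"

definition connected_graph :: "nat set \<Rightarrow> (nat \<Rightarrow> nat \<Rightarrow> bool) \<Rightarrow> bool" where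
  "connected_graph V E \<longleftrightarrow> (\<forall>u\<in>V. \<forall>v\<in>V. (u, v) \<in> {(x, y). E x y}\<^sup>*)"

definition closed_twins :: "(nat \<Rightarrow> nat \<Rightarrow> bool) \<Rightarrow> nat \<Rightarrow> nat \<Rightarrow> bool" where
  "closed_twins E u v \<longleftrightarrow> u \<noteq> v \<and> closed_nbhd E u = closed_nbhd E v"

definition has_closed_twins :: "nat set \<Rightarrow> (nat \<Rightarrow> nat \<Rightarrow> bool) \<Rightarrow> bool" where
  "has_closed_twins V E \<longleftrightarrow> (\<exists>u\<in>V. \<exists>v\<in>V. closed_twins E u v)"

definition locating_dominating ::
    "nat set \<Rightarrow> (nat \<Rightarrow> nat \<Rightarrow> bool) \<Rightarrow> nat set \<Rightarrow> bool" where
  "locating_dominating V E S \<longleftrightarrow> S \<subseteq> V \<and>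
     (\<forall>v\<in>V. closed_nbhd E v \<inter> S \<noteq> {}) \<and>
     (\<forall>u\<in>V - S. \<forall>v\<in>V - S. u \<noteq> v \<longrightarrow> closed_nbhd E u \<inter> S \<noteq> closed_nbhd E v \<inter> S)"

definition gamma_LD :: "nat set \<Rightarrow> (nat \<Rightarrow> nat \<Rightarrow> bool) \<Rightarrow> nat" where
  "gamma_LD V E = Min {card S | S. locating_dominating V E S}"

end

theory Submission
  imports Defs
begin

definition nx :: "nat \<Rightarrow> nat \<Rightarrow> nat" where
  "nx m k = (if Suc k = m then 0 else Suc k)"
definition pv :: "nat \<Rightarrow> nat \<Rightarrow> nat" where
  "pv m i = (if i = 0 then m - 1 else i - 1)"

definition GE :: "nat \<Rightarrow> nat \<Rightarrow> nat \<Rightarrow> nat \<Rightarrow> bool" where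
  "GE m R u v \<longleftrightarrow> u < m*R \<and> v < m*R \<and> u \<noteq> v \<and>
    ((u div R = v div R \<and> \<not>(u mod R \<le> 1 \<and> v mod R \<le> 1)) \<or>
     (u mod R = 1 \<and> v mod R = 0 \<and> v div R = nx m (u div R)) \<or>
     (v mod R = 1 \<and> u mod R = 0 \<and> u div R = nx m (v div R)))"

context fixes m R :: nat assumes mpos: "m \<ge> 2" and R5: "R \<ge> 5"
begin

lemma Rpos: "R > 0" using R5 by simp

lemma vdiv[simp]: "j < R \<Longrightarrow> (i*R+j) div R = i" using Rpos by simp
lemma vmod[simp]: "j < R \<Longrightarrow> (i*R+j) mod R = j" using Rpos by simp

lemma vlt: "j < R \<Longrightarrow> (i*R+j < m*R) = (i < m)"
  by (smt (verit) Rpos add_lessD1 div_less_iff_less_mult mult.commute vdiv)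

lemma dlt: "v < m*R \<longleftrightarrow> v div R < m"
  by (simp add: Rpos div_less_iff_less_mult)

lemma nx_lt: "k < m \<Longrightarrow> nx m k < m" unfolding nx_def using mpos by auto
lemma pv_lt: "i < m \<Longrightarrow> pv m i < m" unfolding pv_def using mpos by auto
lemma nx_pv: "i < m \<Longrightarrow> nx m (pv m i) = i" unfolding nx_def pv_def using mpos by auto
lemma nx_neq: "k < m \<Longrightarrow> nx m k \<noteq> k" unfolding nx_def using mpos by auto
lemma nx_inj: "k1 < m \<Longrightarrow> k2 < m \<Longrightarrow> nx m k1 = nx m k2 \<Longrightarrow> k1 = k2"
  unfolding nx_def by (auto split: if_splits)

lemma decomp: "v = (v div R)*R + v mod R" by simp


lemma nb_inner: assumes "x < m*R" "x mod R \<ge> 2"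
  shows "closed_nbhd (GE m R) x = {v. v div R = x div R}"
  using assms unfolding closed_nbhd_def open_nbhd_def GE_def
  by (auto simp: dlt)

lemma nb_b_sub: assumes "b mod R = 1"
  shows "closed_nbhd (GE m R) b \<subseteq> {v. v div R = b div R} \<union> {nx m (b div R) * R}"
proof
  fix v assume "v \<in> closed_nbhd (GE m R) b"
  then have "v = b \<or> GE m R b v" unfolding closed_nbhd_def open_nbhd_def by auto
  then show "v \<in> {v. v div R = b div R} \<union> {nx m (b div R) * R}"
  proof
    assume "GE m R b v"
    then show ?thesis using assms unfolding GE_def
      by (metis (mono_tags, lifting) Int_iff Un_iff add.right_neutral decomp insertI1 mem_Collect_eq one_neq_zero)
  qed auto
qed

lemma nb_a_sub: assumes "a mod R = 0" "k < m" "a div R = nx m k"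
  shows "closed_nbhd (GE m R) a \<subseteq> {v. v div R = a div R} \<union> {k * R + 1}"
proof
  fix v assume "v \<in> closed_nbhd (GE m R) a"
  then have "v = a \<or> GE m R a v" unfolding closed_nbhd_def open_nbhd_def by auto
  then show "v \<in> {v. v div R = a div R} \<union> {k * R + 1}"
  proof
    assume g: "GE m R a v"
    show ?thesis
    proof (cases "v div R = a div R")
      case False
      with g assms have "v mod R = 1" "nx m (v div R) = nx m k" "v < m*R" unfolding GE_def by auto
      then have "v div R = k" using nx_inj assms dlt by blast
      then show ?thesis using \<open>v mod R = 1\<close> decomp[of v] by auto
    qed auto
  qed auto
qed

lemma nb_inner_sub: assumes "u < m*R" "v div R = u div R" "v mod R \<ge> 2"
  shows "v \<in> closed_nbhd (GE m R) u"
  using assms unfolding closed_nbhd_def open_nbhd_def GE_def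
  by (auto simp: dlt)



lemma inj_blk: "inj_on (\<lambda>k. i*R+k) A" by (auto simp: inj_on_def)

lemma img_char: assumes "A \<subseteq> {..<R}"
  shows "v \<in> (\<lambda>k. i*R+k) ` A \<longleftrightarrow> v div R = i \<and> v mod R \<in> A"
proof
  assume "v \<in> (\<lambda>k. i*R+k) ` A"
  then obtain k where "k \<in> A" "v = i*R+k" by auto
  then show "v div R = i \<and> v mod R \<in> A" using assms by auto
next
  assume "v div R = i \<and> v mod R \<in> A"
  then show "v \<in> (\<lambda>k. i*R+k) ` A" using decomp[of v] by (intro image_eqI[where x="v mod R"]) auto
qed

lemma GE_inner_iff: assumes "u < m*R" "u mod R \<ge> 2"
  shows "GE m R u v \<longleftrightarrow> v div R = u div R \<and> v mod R \<in> {..<R} - {u mod R}"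
proof -
  have "v div R = u div R \<Longrightarrow> v mod R = u mod R \<Longrightarrow> v = u" using decomp[of u] decomp[of v] by metis
  then show ?thesis using assms Rpos unfolding GE_def by (auto simp: dlt)
qed

lemma GE_zero_iff: assumes "u < m*R" "u mod R = 0"
  shows "GE m R u v \<longleftrightarrow> (v div R = u div R \<and> v mod R \<in> {2..<R}) \<or> v = pv m (u div R) * R + 1"
proof
  have ud: "u div R < m" using assms dlt by auto
  assume g: "GE m R u v"
  show "(v div R = u div R \<and> v mod R \<in> {2..<R}) \<or> v = pv m (u div R) * R + 1"
  proof (cases "v div R = u div R")
    case True
    have "\<not> (v mod R = 1 \<and> u div R = nx m (v div R))"
    proof
      assume "v mod R = 1 \<and> u div R = nx m (v div R)"
      then have e: "u div R = nx m (v div R)" by (rule conjunct2)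
      show False by (rule notE[OF nx_neq[OF ud] e[unfolded True, symmetric]])
    qed
    then have "v mod R \<ge> 2" using g True assms unfolding GE_def by auto
    then show ?thesis using True Rpos by auto
  next
    case False
    with g assms have "v mod R = 1" and h: "u div R = nx m (v div R)" and "v < m*R" unfolding GE_def by auto
    have t: "nx m (pv m (u div R)) = nx m (v div R)" using nx_pv[OF ud] h by (rule trans)
    have vl: "v div R < m" using \<open>v < m*R\<close> dlt by blast
    have "v div R = pv m (u div R)" by (rule nx_inj[OF vl pv_lt[OF ud] t[symmetric]])
    then show ?thesis using \<open>v mod R = 1\<close> decomp[of v] by auto
  qed
next
  have ud: "u div R < m" using assms dlt by auto
  have pl: "pv m (u div R) < m" using pv_lt ud by auto
  assume "(v div R = u div R \<and> v mod R \<in> {2..<R}) \<or> v = pv m (u div R) * R + 1"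
  then show "GE m R u v"
  proof
    assume h: "v div R = u div R \<and> v mod R \<in> {2..<R}"
    then have "v \<noteq> u" using assms by auto
    then show ?thesis using h assms ud dlt unfolding GE_def by auto
  next
    assume h: "v = pv m (u div R) * R + 1"
    have R1: "1 < R" using R5 by simp
    have vm: "v mod R = 1" "v div R = pv m (u div R)" unfolding h by (rule vmod[OF R1], rule vdiv[OF R1])
    have "v < m*R" using vm pl dlt by auto
    moreover have "v \<noteq> u" using vm assms by auto
    ultimately show ?thesis using vm assms nx_pv[OF ud] unfolding GE_def by auto
  qed
qed

lemma GE_one_iff: assumes "u < m*R" "u mod R = 1"
  shows "GE m R u v \<longleftrightarrow> (v div R = u div R \<and> v mod R \<in> {2..<R}) \<or> v = nx m (u div R) * R"
proof
  have ud: "u div R < m" using assms dlt by auto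
  assume g: "GE m R u v"
  show "(v div R = u div R \<and> v mod R \<in> {2..<R}) \<or> v = nx m (u div R) * R"
  proof (cases "v div R = u div R")
    case True
    have "\<not> (v div R = nx m (u div R))"
    proof
      assume "v div R = nx m (u div R)"
      then show False using True nx_neq[OF ud] by argo
    qed
    then have "v mod R \<ge> 2" using g True assms unfolding GE_def by auto
    then show ?thesis using True Rpos by auto
  next
    case False
    with g assms have "v mod R = 0" "v div R = nx m (u div R)" unfolding GE_def by auto
    then show ?thesis using decomp[of v] by auto
  qed
next
  have ud: "u div R < m" using assms dlt by auto
  have pl: "nx m (u div R) < m" using nx_lt ud by auto
  assume "(v div R = u div R \<and> v mod R \<in> {2..<R}) \<or> v = nx m (u div R) * R"
  then show "GE m R u v"
  proof
    assume h: "v div R = u div R \<and> v mod R \<in> {2..<R}"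
    then have "v \<noteq> u" using assms by auto
    then show ?thesis using h assms ud dlt unfolding GE_def by auto
  next
    assume h: "v = nx m (u div R) * R"
    have vm: "v mod R = 0" "v div R = nx m (u div R)" using h Rpos by auto
    have "v < m*R" using vm pl dlt by auto
    moreover have "v \<noteq> u" using vm assms by auto
    ultimately show ?thesis using vm assms unfolding GE_def by auto
  qed
qed

lemma card_all: assumes "u < m*R" shows "card (open_nbhd (GE m R) u) = R - 1"
proof -
  let ?i = "u div R"
  have sub1: "{..<R} - {u mod R} \<subseteq> {..<R}" and sub2: "{2..<R} \<subseteq> {..<R}" by auto
  consider "u mod R \<ge> 2" | "u mod R = 0" | "u mod R = 1" by linarith
  then show ?thesis
  proof cases
    case 1
    have "open_nbhd (GE m R) u = (\<lambda>k. ?i*R+k) ` ({..<R} - {u mod R})"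
      unfolding open_nbhd_def using GE_inner_iff[OF assms 1] img_char[OF sub1] by auto
    then show ?thesis using Rpos by (simp add: card_image inj_blk)
  next
    case 2
    let ?w = "pv m ?i * R + 1"
    have eq: "open_nbhd (GE m R) u = (\<lambda>k. ?i*R+k) ` {2..<R} \<union> {?w}"
      unfolding open_nbhd_def using GE_zero_iff[OF assms 2] img_char[OF sub2] by auto
    have wm: "?w mod R = 1" by (rule vmod) (use R5 in simp)
    have "?w \<notin> (\<lambda>k. ?i*R+k) ` {2..<R}"
    proof
      assume "?w \<in> (\<lambda>k. ?i*R+k) ` {2..<R}"
      then have "?w mod R \<in> {2..<R}" using img_char[OF sub2] by blast
      then show False using wm by simp
    qed
    then show ?thesis using eq R5 by (simp add: card_image inj_blk)
  next
    case 3
    let ?w = "nx m ?i * R"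
    have eq: "open_nbhd (GE m R) u = (\<lambda>k. ?i*R+k) ` {2..<R} \<union> {?w}"
      unfolding open_nbhd_def using GE_one_iff[OF assms 3] img_char[OF sub2] by auto
    have wm: "?w mod R = 0" by simp
    have "?w \<notin> (\<lambda>k. ?i*R+k) ` {2..<R}"
    proof
      assume "?w \<in> (\<lambda>k. ?i*R+k) ` {2..<R}"
      then have "?w mod R \<in> {2..<R}" using img_char[OF sub2] by blast
      then show False using wm by simp
    qed
    then show ?thesis using eq R5 by (simp add: card_image inj_blk)
  qed
qed


lemma LD_dist: "locating_dominating V E S \<Longrightarrow> u \<in> V \<Longrightarrow> v \<in> V \<Longrightarrow> u \<notin> S \<Longrightarrow> v \<notin> S \<Longrightarrow> u \<noteq> v
   \<Longrightarrow> closed_nbhd E u \<inter> S \<noteq> closed_nbhd E v \<inter> S"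
  unfolding locating_dominating_def by blast

lemma blk_lt: "v \<in> {..<m*R} \<Longrightarrow> v div R < m" using dlt by auto

lemma forced_pair: assumes LD: "locating_dominating {..<m*R} (GE m R) S" and i: "i < m"
  and x: "x div R = i" "x mod R \<ge> 2" "x \<notin> S" and y: "y div R = i" "y mod R \<ge> 2" "y \<notin> S"
  shows "x = y"
proof (rule ccontr)
  assume ne: "x \<noteq> y"
  have xl: "x < m*R" "y < m*R" using x y i dlt by auto
  have "closed_nbhd (GE m R) x = closed_nbhd (GE m R) y"
    using nb_inner[OF xl(1) x(2)] nb_inner[OF xl(2) y(2)] x y by simp
  then show False using LD_dist[OF LD _ _ x(3) y(3) ne] xl by simp
qed

lemma inner_eq: "{v. v div R = i \<and> 2 \<le> v mod R} = (\<lambda>k. i*R+k) ` {2..<R}"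
proof (rule set_eqI)
  fix v
  have sub: "{2..<R} \<subseteq> {..<R}" by auto
  have "v mod R < R" using Rpos by simp
  then show "v \<in> {v. v div R = i \<and> 2 \<le> v mod R} \<longleftrightarrow> v \<in> (\<lambda>k. i*R+k) ` {2..<R}"
    using img_char[OF sub, of v i] by auto
qed

lemma card_inner_blk: "card {v. v div R = i \<and> 2 \<le> v mod R} = R - 2"
  by (simp add: inner_eq card_image inj_blk)

lemma inner_ge: assumes LD: "locating_dominating {..<m*R} (GE m R) S" and i: "i < m"
  shows "card (S \<inter> {v. v div R = i \<and> 2 \<le> v mod R}) + 1 \<ge> R - 2"
proof -
  let ?I = "{v. v div R = i \<and> 2 \<le> v mod R}"
  have fI: "finite ?I" by (simp add: inner_eq)
  have fD: "finite (?I - S)" using fI by blast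
  have "\<forall>a1\<in>?I - S. \<forall>a2\<in>?I - S. a1 = a2" using forced_pair[OF LD i] by blast
  then have c1: "card (?I - S) \<le> Suc 0" using card_le_Suc0_iff_eq[OF fD] by blast
  have c2: "card ?I = card (?I \<inter> S) + card (?I - S)" by (rule card_Int_Diff[OF fI])
  have c3: "?I \<inter> S = S \<inter> ?I" by blast
  show ?thesis using c1 c2 card_inner_blk[of i] unfolding c3 by linarith
qed

lemma blk_S_eq: assumes "i*R \<notin> S" "i*R+1 \<notin> S"
  shows "{v. v div R = i} \<inter> S = {v. v div R = i \<and> 2 \<le> v mod R} \<inter> S"
proof -
  have h: "v = i*R \<or> v = i*R+1" if "v div R = i" "v mod R < 2" for v
  proof -
    have "v mod R = 0 \<or> v mod R = 1" using that(2) by linarith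
    then show ?thesis using decomp[of v] that(1) by auto
  qed
  show ?thesis
  proof (intro set_eqI iffI)
    fix v assume v: "v \<in> {v. v div R = i} \<inter> S"
    have "\<not> v mod R < 2" using h[of v] v assms by auto
    then show "v \<in> {v. v div R = i \<and> 2 \<le> v mod R} \<inter> S" using v by auto
  qed auto
qed

lemma D_next: assumes LD: "locating_dominating {..<m*R} (GE m R) S" and i: "i < m"
  and a: "i*R \<notin> S" and b: "i*R+1 \<notin> S"
  and x: "x div R = i" "x mod R \<ge> 2" "x \<notin> S"
  shows "nx m i * R \<in> S"
proof (rule ccontr)
  assume nS: "nx m i * R \<notin> S"
  let ?b = "i*R+1" and ?I = "{v. v div R = i \<and> 2 \<le> v mod R}"
  have R1: "1 < R" using R5 by simp
  have bm: "?b mod R = 1" "?b div R = i" by (rule vmod[OF R1], rule vdiv[OF R1])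
  have bl: "?b < m*R" using bm i dlt by auto
  have xl: "x < m*R" using x i dlt by auto
  have s1: "closed_nbhd (GE m R) ?b \<inter> S \<subseteq> {v. v div R = i} \<inter> S"
    using nb_b_sub[OF bm(1)] bm nS by auto
  have s2: "?I \<subseteq> closed_nbhd (GE m R) ?b"
    using nb_inner_sub[OF bl] bm by auto
  have e1: "closed_nbhd (GE m R) ?b \<inter> S = {v. v div R = i} \<inter> S"
    using s1 s2 blk_S_eq[OF a b] by auto
  have e2: "closed_nbhd (GE m R) x \<inter> S = {v. v div R = i} \<inter> S"
    using nb_inner[OF xl x(2)] x by simp
  have "?b \<noteq> x" using bm x by auto
  then show False using LD_dist[OF LD _ _ b x(3)] e1 e2 bl xl by simp
qed

lemma D_prev: assumes LD: "locating_dominating {..<m*R} (GE m R) S" and k: "k < m"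
  and a: "nx m k*R \<notin> S" and b: "nx m k*R+1 \<notin> S"
  and x: "x div R = nx m k" "x mod R \<ge> 2" "x \<notin> S"
  shows "k * R + 1 \<in> S"
proof (rule ccontr)
  assume nS: "k * R + 1 \<notin> S"
  let ?i = "nx m k"
  let ?a = "?i*R" and ?I = "{v. v div R = ?i \<and> 2 \<le> v mod R}"
  have i: "?i < m" using nx_lt[OF k] .
  have am: "?a mod R = 0" "?a div R = ?i" using Rpos by auto
  have al: "?a < m*R" using am i dlt by auto
  have xl: "x < m*R" using x i dlt by auto
  have s1: "closed_nbhd (GE m R) ?a \<inter> S \<subseteq> {v. v div R = ?i} \<inter> S"
    using nb_a_sub[OF am(1) k am(2)] am nS by auto
  have s2: "?I \<subseteq> closed_nbhd (GE m R) ?a"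
    using nb_inner_sub[OF al] am by auto
  have e1: "closed_nbhd (GE m R) ?a \<inter> S = {v. v div R = ?i} \<inter> S"
    using s1 s2 blk_S_eq[OF a b] by auto
  have e2: "closed_nbhd (GE m R) x \<inter> S = {v. v div R = ?i} \<inter> S"
    using nb_inner[OF xl x(2)] x by simp
  have "?a \<noteq> x" using am x by auto
  then show False using LD_dist[OF LD _ _ a x(3)] e1 e2 al xl by simp
qed


lemma blk_eq: "{v. v div R = i} = (\<lambda>k. i*R+k) ` {..<R}"
proof (rule set_eqI)
  fix v
  have sub: "{..<R} \<subseteq> {..<R}" by auto
  have "v mod R < R" using Rpos by simp
  then show "v \<in> {v. v div R = i} \<longleftrightarrow> v \<in> (\<lambda>k. i*R+k) ` {..<R}"
    using img_char[OF sub, of v i] by auto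
qed

lemma card_S_sum: assumes "S \<subseteq> {..<m*R}"
  shows "card S = (\<Sum>i<m. card ({v. v div R = i} \<inter> S))"
proof -
  have "S = (\<Union>i\<in>{..<m}. {v. v div R = i} \<inter> S)" using assms dlt by auto
  moreover have "card (\<Union>i\<in>{..<m}. {v. v div R = i} \<inter> S) = (\<Sum>i<m. card ({v. v div R = i} \<inter> S))"
  proof (rule card_UN_disjoint)
    show "\<forall>i\<in>{..<m}. finite ({v. v div R = i} \<inter> S)" by (simp add: blk_eq)
  qed auto
  ultimately show ?thesis by simp
qed

lemma card_blk: "card ({v. v div R = i} \<inter> S) =
   card (S \<inter> {v. v div R = i \<and> 2 \<le> v mod R}) + of_bool (i*R \<in> S) + of_bool (i*R+1 \<in> S)"
proof -
  let ?B = "{v. v div R = i} \<inter> S" and ?I = "{v. v div R = i \<and> 2 \<le> v mod R}"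
  have fB: "finite ?B" by (simp add: blk_eq)
  have R1: "1 < R" using R5 by simp
  have m0: "(i*R) mod R = 0" "(i*R) div R = i" using Rpos by auto
  have m1: "(i*R+1) mod R = 1" "(i*R+1) div R = i" by (rule vmod[OF R1], rule vdiv[OF R1])
  have h: "v = i*R \<or> v = i*R+1" if "v div R = i" "\<not> 2 \<le> v mod R" for v
  proof -
    have "v mod R = 0 \<or> v mod R = 1" using that(2) by linarith
    then show ?thesis using decomp[of v] that(1) by auto
  qed
  have e1: "?B \<inter> ?I = S \<inter> ?I" by auto
  have e2: "?B - ?I = {i*R, i*R+1} \<inter> S" using h m0 m1 by auto
  have ne: "i*R \<noteq> i*R+1" by simp
  have c: "card ({i*R, i*R+1} \<inter> S) = of_bool (i*R \<in> S) + of_bool (i*R+1 \<in> S)"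
    using ne by (cases "i*R \<in> S"; cases "i*R+1 \<in> S") (auto simp: Int_insert_left)
  show ?thesis using card_Int_Diff[OF fB, of ?I] e1 e2 c by simp
qed

lemma nx_bij: "bij_betw (nx m) {..<m} {..<m}"
proof -
  have inj: "inj_on (nx m) {..<m}" using nx_inj by (auto simp: inj_on_def)
  have "nx m ` {..<m} \<subseteq> {..<m}" using nx_lt by auto
  then have "nx m ` {..<m} = {..<m}" using endo_inj_surj[OF _ _ inj] by simp
  then show ?thesis using inj by (simp add: bij_betw_def)
qed

lemma main_bound: assumes LD: "locating_dominating {..<m*R} (GE m R) S"
  shows "m*R < 2 * card S"
proof -
  define I where "I i = {v. v div R = i \<and> 2 \<le> v mod R}" for i
  define c where "c i = card (S \<inter> I i)" for i
  define A where "A i = (of_bool (i*R \<in> S) :: nat)" for i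
  define B where "B i = (of_bool (i*R+1 \<in> S) :: nat)" for i
  define D where "D i \<longleftrightarrow> i*R \<notin> S \<and> i*R+1 \<notin> S \<and> (\<exists>x. x div R = i \<and> 2 \<le> x mod R \<and> x \<notin> S)" for i
  define h where "h i = (of_bool (D i) :: nat)" for i
  have SV: "S \<subseteq> {..<m*R}" using LD unfolding locating_dominating_def by auto
  have cardS: "card S = (\<Sum>i<m. c i + A i + B i)"
    unfolding card_S_sum[OF SV] c_def A_def B_def I_def using card_blk by simp
  have p1: "c i + 1 \<ge> R - 2" if "i < m" for i
    using inner_ge[OF LD that] unfolding c_def I_def by simp
  have p2: "c i + A i + B i + h i \<ge> R - 2" if i: "i < m" for i
  proof (cases "D i")
    case True then show ?thesis using p1[OF i] unfolding h_def by simp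
  next
    case False
    show ?thesis
    proof (cases "i*R \<in> S \<or> i*R+1 \<in> S")
      case True then show ?thesis using p1[OF i] unfolding A_def B_def by auto
    next
      case nab: False
      then have "I i \<subseteq> S" using False unfolding D_def I_def by auto
      then have "S \<inter> I i = I i" by auto
      then have "c i = R - 2" unfolding c_def I_def using card_inner_blk by simp
      then show ?thesis by simp
    qed
  qed
  have p3: "h i \<le> A (nx m i)" if i: "i < m" for i
  proof (cases "D i")
    case True
    then obtain x where "x div R = i" "2 \<le> x mod R" "x \<notin> S" "i*R \<notin> S" "i*R+1 \<notin> S" unfolding D_def by auto
    then have "nx m i * R \<in> S" using D_next[OF LD i] by blast
    then show ?thesis unfolding A_def h_def by simp
  qed (simp add: h_def)
  have p4: "h (nx m i) \<le> B i" if i: "i < m" for i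
  proof (cases "D (nx m i)")
    case True
    then obtain x where "x div R = nx m i" "2 \<le> x mod R" "x \<notin> S" "nx m i*R \<notin> S" "nx m i*R+1 \<notin> S" unfolding D_def by auto
    then have "i * R + 1 \<in> S" using D_prev[OF LD i] by blast
    then show ?thesis unfolding B_def h_def by simp
  qed (simp add: h_def)
  have rA: "(\<Sum>i<m. A (nx m i)) = (\<Sum>i<m. A i)" by (rule sum.reindex_bij_betw[OF nx_bij])
  have rh: "(\<Sum>i<m. h (nx m i)) = (\<Sum>i<m. h i)" by (rule sum.reindex_bij_betw[OF nx_bij])
  have sA: "(\<Sum>i<m. h i) \<le> (\<Sum>i<m. A i)" using sum_mono[of "{..<m}" h "\<lambda>i. A (nx m i)"] p3 rA by auto
  have sB: "(\<Sum>i<m. h i) \<le> (\<Sum>i<m. B i)" using sum_mono[of "{..<m}" "\<lambda>i. h (nx m i)" B] p4 rh by auto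
  have s1: "(\<Sum>i<m. R - 3) \<le> (\<Sum>i<m. c i)" using sum_mono[of "{..<m}" "\<lambda>i. R - 3" c] p1 by force
  have s2: "(\<Sum>i<m. R - 2) \<le> (\<Sum>i<m. c i + A i + B i + h i)" using sum_mono[of "{..<m}" "\<lambda>i. R - 2"] p2 by force
  have T: "card S = (\<Sum>i<m. c i) + (\<Sum>i<m. A i) + (\<Sum>i<m. B i)" using cardS by (simp add: sum.distrib)
  have s2': "m * (R - 2) \<le> card S + (\<Sum>i<m. h i)" using s2 T by (simp add: sum.distrib)
  have s1': "m * (R - 3) \<le> (\<Sum>i<m. c i)" using s1 by simp
  have "m * (R-3) + 2 * m * (R-2) \<le> 3 * card S" using s1' s2' sA sB T by linarith
  moreover have "m * (R-3) + 2 * m * (R-2) = m * (3*R - 7)" using R5 by (simp add: algebra_simps)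
  moreover have "3 * (m*R) < 2 * (m * (3*R - 7))" using R5 mpos
  proof -
    have "3*R < 2*(3*R-7)" using R5 by linarith
    then show ?thesis using mpos by (metis mult.left_commute mult_less_cancel1 not_numeral_le_zero zero_less_iff_neq_zero le_zero_eq)
  qed
  ultimately show ?thesis by linarith
qed


lemma sym_GE: "GE m R u v \<Longrightarrow> GE m R v u" unfolding GE_def by auto

lemma sym_GE2: "GE m R u v \<Longrightarrow> GE m R v u" unfolding GE_def by auto

lemma simple: "simple_graph {..<m*R} (GE m R)"
  unfolding simple_graph_def using sym_GE by (auto simp: GE_def)

lemma edge_in: assumes "i < m" "j < R" "k < R" "j \<noteq> k" "\<not>(j \<le> 1 \<and> k \<le> 1)"
  shows "GE m R (i*R+j) (i*R+k)"
  using assms vlt[of j i] vlt[of k i] unfolding GE_def by simp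

lemma edge_cross: assumes "Suc i < m" shows "GE m R (i*R+1) (Suc i*R)"
proof -
  have R1: "1 < R" using R5 by simp
  have a: "(i*R+1) mod R = 1" "(i*R+1) div R = i" by (rule vmod[OF R1], rule vdiv[OF R1])
  have b: "(Suc i*R) mod R = 0" "(Suc i*R) div R = Suc i" using Rpos by auto
  have l1: "i*R+1 < m*R" using vlt[OF R1, of i] assms by simp
  have l2: "Suc i*R < m*R" using mult_less_cancel2[of "Suc i" R m] assms Rpos by simp
  have nx: "nx m i = Suc i" using assms unfolding nx_def by simp
  have ne: "i*R+1 \<noteq> Suc i*R" using a b by auto
  show ?thesis unfolding GE_def using a b l1 l2 nx ne by simp
qed

lemma rstep: "(a, b) \<in> {(x,y). GE m R x y}\<^sup>* \<Longrightarrow> GE m R b c \<Longrightarrow> (a, c) \<in> {(x,y). GE m R x y}\<^sup>*"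
  by (rule rtrancl_into_rtrancl) auto

lemma reach_blocks: "i < m \<Longrightarrow> (0, i*R) \<in> {(x,y). GE m R x y}\<^sup>*"
proof (induction i)
  case 0 then show ?case by simp
next
  case (Suc i)
  have i: "i < m" using Suc by simp
  have R2: "2 < R" using R5 by simp
  have e1: "GE m R (i*R+0) (i*R+2)" by (rule edge_in[OF i]) (use R5 in auto)
  have e2: "GE m R (i*R+2) (i*R+1)" by (rule edge_in[OF i]) (use R5 in auto)
  have e3: "GE m R (i*R+1) (Suc i*R)" by (rule edge_cross[OF Suc.prems])
  have "(0, i*R) \<in> {(x,y). GE m R x y}\<^sup>*" using Suc i by simp
  then have "(0, i*R+0) \<in> {(x,y). GE m R x y}\<^sup>*" by simp
  then have "(0, i*R+2) \<in> {(x,y). GE m R x y}\<^sup>*" using e1 by (rule rstep)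
  then have "(0, i*R+1) \<in> {(x,y). GE m R x y}\<^sup>*" using e2 by (rule rstep)
  then show ?case using e3 by (rule rstep)
qed

lemma reach0: assumes "v < m*R" shows "(0, v) \<in> {(x,y). GE m R x y}\<^sup>*"
proof -
  let ?i = "v div R" and ?j = "v mod R"
  have i: "?i < m" using assms dlt by simp
  have j: "?j < R" using Rpos by simp
  have v: "v = ?i*R + ?j" by simp
  have r0: "(0, ?i*R) \<in> {(x,y). GE m R x y}\<^sup>*" using reach_blocks[OF i] .
  show ?thesis
  proof (cases "?j = 0")
    case True then show ?thesis using r0 v by simp
  next
    case False
    have e1: "GE m R (?i*R+0) (?i*R+2)" by (rule edge_in[OF i]) (use R5 in auto)
    then have r1: "(0, ?i*R+2) \<in> {(x,y). GE m R x y}\<^sup>*" using rstep[OF r0] by simp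
    show ?thesis
    proof (cases "?j = 2")
      case True then show ?thesis using r1 v by simp
    next
      case False
      have "GE m R (?i*R+2) (?i*R+?j)" by (rule edge_in[OF i]) (use R5 j False in auto)
      then have "(0, ?i*R+?j) \<in> {(x,y). GE m R x y}\<^sup>*" using rstep[OF r1] by simp
      then show ?thesis using v by simp
    qed
  qed
qed

lemma connected: "connected_graph {..<m*R} (GE m R)"
  unfolding connected_graph_def
proof (intro ballI)
  fix u v assume u: "u \<in> {..<m*R}" and v: "v \<in> {..<m*R}"
  let ?E = "{(x,y). GE m R x y}"
  have cv: "?E\<inverse> = ?E" using sym_GE2 by auto
  have "(0, u) \<in> ?E\<^sup>*" using reach0 u by simp
  then have "(u, 0) \<in> (?E\<inverse>)\<^sup>*" by (rule rtrancl_converseI)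
  then have "(u, 0) \<in> ?E\<^sup>*" using cv by simp
  moreover have "(0, v) \<in> ?E\<^sup>*" using reach0 v by simp
  ultimately show "(u, v) \<in> ?E\<^sup>*" by (rule rtrancl_trans)
qed

lemma twins: "has_closed_twins {..<m*R} (GE m R)"
proof -
  have "2*5 \<le> m*R" by (rule mult_le_mono[OF mpos R5])
  then have l2: "2 < m*R" "3 < m*R" by linarith+
  have m2: "2 mod R = 2" "2 div R = 0" "3 mod R = 3" "3 div R = 0" using R5 by auto
  have "closed_nbhd (GE m R) 2 = closed_nbhd (GE m R) 3"
    using nb_inner[OF l2(1)] nb_inner[OF l2(2)] m2 by simp
  then show ?thesis unfolding has_closed_twins_def closed_twins_def using l2
    by (intro bexI[of _ 2] bexI[of _ 3]) auto
qed

lemma gamma_bound: "m*R < 2 * gamma_LD {..<m*R} (GE m R)"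
proof -
  let ?X = "{card S | S. locating_dominating {..<m*R} (GE m R) S}"
  have fin: "finite ?X"
  proof (rule finite_subset[of _ "{..m*R}"])
    show "?X \<subseteq> {..m*R}"
    proof
      fix x assume "x \<in> ?X"
      then obtain S where "x = card S" "S \<subseteq> {..<m*R}" unfolding locating_dominating_def by auto
      then show "x \<in> {..m*R}" using card_mono[of "{..<m*R}" S] by auto
    qed
  qed simp
  have "locating_dominating {..<m*R} (GE m R) {..<m*R}"
    unfolding locating_dominating_def closed_nbhd_def by auto
  then have ne: "?X \<noteq> {}" by blast
  have "\<forall>x\<in>?X. m*R < 2*x" using main_bound by auto
  then have "\<forall>x\<in>?X. m*R div 2 < x" by auto
  then have "m*R div 2 < Min ?X" using Min_gr_iff[OF fin ne] by blast
  then show ?thesis unfolding gamma_LD_def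
    using Min_in[OF fin ne] main_bound by auto
qed

end

theorem proposition11:
  fixes r :: nat
  assumes "r \<ge> 4"
  shows "\<forall>N::nat. \<exists>V E. simple_graph V E \<and> card V \<ge> N \<and> connected_graph V E \<and>
           regular V E r \<and> has_closed_twins V E \<and>
           real (gamma_LD V E) > real (card V) / 2"
proof
  fix N :: nat
  let ?m = "N + 2" and ?R = "r + 1"
  have m2: "?m \<ge> 2" by simp
  have R5: "?R \<ge> 5" using assms by simp
  have cV: "card {..<?m*?R} = ?m*?R" by simp
  have "N \<le> ?m * ?R" by simp
  moreover have "regular {..<?m*?R} (GE ?m ?R) r"
    unfolding regular_def using card_all[OF m2 R5] by simp
  moreover have "real (gamma_LD {..<?m*?R} (GE ?m ?R)) > real (card {..<?m*?R}) / 2"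
  proof -
    have "?m*?R < 2 * gamma_LD {..<?m*?R} (GE ?m ?R)" by (rule gamma_bound[OF m2 R5])
    then have "real (?m*?R) < 2 * real (gamma_LD {..<?m*?R} (GE ?m ?R))" by linarith
    then show ?thesis unfolding cV by simp
  qed
  ultimately show "\<exists>V E. simple_graph V E \<and> card V \<ge> N \<and> connected_graph V E \<and>
           regular V E r \<and> has_closed_twins V E \<and>
           real (gamma_LD V E) > real (card V) / 2"
    using simple[OF m2 R5] connected[OF m2 R5] twins[OF m2 R5] cV by metis
qed

end
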